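(* Let $(\mathrm{RRT}_n)_{n\ge1}$ be the random recursive tree and $\mathrm{Out}(\mathrm{RRT}_n)$ its out-degree profile. For all $\varepsilon\in(0,1/2)$, all $q\in(1,2)$ and all functions $f:\mathbb N\to\mathbb R$ such that $f(x)=o\big((2-\varepsilon)^{x/q}\big)$ as $x\to\infty$, we have \[\frac1n\int f\,d\,\mathrm{Out}(\mathrm{RRT}_n)\to\sum_{x=0}^\infty 2^{-x-1}f(x)\] almost surely as $n\to\infty$.
   Context: $\mathbb N=\{0,1,2,\dots\}$. The random recursive tree: $\mathrm{RRT}_1$ has a single node (the root); $\mathrm{RRT}_{n+1}$ is obtained from $\mathrm{RRT}_n$ by choosing a node uniformly at random and adding a child to it. For a rooted tree $\tau$, its out-degree profile is the measure $\mathrm{Out}(\tau)=\sum_{v\in\tau}\delta_{\mathrm{outdeg}(v)}$ on $\mathbb N$, where $\mathrm{outdeg}(v)$ is the number of children of $v$. *)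

theory Defs
  imports "HOL-Probability.Probability" "HOL-Library.Landau_Symbols"
begin

text \<open>Random recursive tree sequence, coupled on one probability space.
  Nodes of RRT_n are 0,...,n-1 (node 0 is the root, node k+1 is the node added
  in step k+1).  A sample point w :: nat => nat records parent choices:
  w k is the parent of node k+1, chosen uniformly from the existing nodes
  {0..k}, independently over k.\<close>

definition rrt_space :: "(nat \<Rightarrow> nat) measure" where
  "rrt_space = (\<Pi>\<^sub>M k\<in>(UNIV::nat set). measure_pmf (pmf_of_set {0..k}))"

definition rrt_outdeg :: "(nat \<Rightarrow> nat) \<Rightarrow> nat \<Rightarrow> nat \<Rightarrow> nat" where
  "rrt_outdeg w n v = card {k. Suc k < n \<and> w k = v}"

text \<open>Out-degree profile of RRT_n: the finite counting measure
  sum over nodes v of delta_{outdeg v}, represented as a multiset on nat.\<close>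
definition rrt_Out :: "(nat \<Rightarrow> nat) \<Rightarrow> nat \<Rightarrow> nat multiset" where
  "rrt_Out w n = image_mset (rrt_outdeg w n) (mset_set {0..<n})"

definition integral_mset :: "(nat \<Rightarrow> real) \<Rightarrow> nat multiset \<Rightarrow> real" where
  "integral_mset f M = sum_mset (image_mset f M)"

end

theory Submission
  imports Defs "HOL-Library.Discrete_Functions" "HOL-Real_Asymp.Real_Asymp"
begin

definition Wm :: "nat \<Rightarrow> (nat \<Rightarrow> nat) set" where
  "Wm m = {u. (\<forall>k<m. u k \<le> k) \<and> (\<forall>k. m \<le> k \<longrightarrow> u k = 0)}"

lemma Wm_0: "Wm 0 = {\<lambda>_. 0}" by (auto simp: Wm_def)

lemma Wm_Suc: "Wm (Suc m) = (\<lambda>(u,j). u(m:=j)) ` (Wm m \<times> {..m})"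
proof
  show "(\<lambda>(u,j). u(m:=j)) ` (Wm m \<times> {..m}) \<subseteq> Wm (Suc m)" by (auto simp: Wm_def)
  show "Wm (Suc m) \<subseteq> (\<lambda>(u,j). u(m:=j)) ` (Wm m \<times> {..m})"
  proof
    fix u assume u: "u \<in> Wm (Suc m)"
    have "u = (u(m:=0))(m := u m)" by simp
    moreover have "u(m:=0) \<in> Wm m" using u by (auto simp: Wm_def)
    moreover have "u m \<in> {..m}" using u by (auto simp: Wm_def)
    ultimately show "u \<in> (\<lambda>(u,j). u(m:=j)) ` (Wm m \<times> {..m})"
      by (auto intro!: image_eqI[where x="(u(m:=0), u m)"])
  qed
qed

lemma inj_Wm_Suc_aux:
  assumes A: "u \<in> Wm m" "u' \<in> Wm m" and E: "u(m:=j) = u'(m:=j')"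
  shows "u = u' \<and> j = j'"
proof
  show "j = j'" using fun_cong[OF E, of m] by simp
  show "u = u'"
  proof
    fix k show "u k = u' k"
      using fun_cong[OF E, of k] A by (cases "k = m") (auto simp: Wm_def)
  qed
qed

lemma inj_Wm_Suc: "inj_on (\<lambda>(u,j). u(m:=j)) (Wm m \<times> {..m})"
  unfolding inj_on_def using inj_Wm_Suc_aux by fast

lemma finite_Wm: "finite (Wm m)"
  by (induction m) (auto simp: Wm_0 Wm_Suc)

lemma card_Wm: "card (Wm m) = fact m"
proof (induction m)
  case 0 then show ?case by (simp add: Wm_0)
next
  case (Suc m)
  have "card (Wm (Suc m)) = card (Wm m \<times> {..m})"
    unfolding Wm_Suc by (rule card_image[OF inj_Wm_Suc])
  also have "\<dots> = fact m * Suc m" by (simp add: card_cartesian_product Suc)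
  finally show ?case by (simp add: algebra_simps)
qed

lemma Wm_nonempty: "Wm m \<noteq> {}"
  using card_Wm[of m] by (metis card.empty fact_nonzero)

definition avg :: "nat \<Rightarrow> ((nat \<Rightarrow> nat) \<Rightarrow> real) \<Rightarrow> real" where
  "avg m F = (\<Sum>u\<in>Wm m. F u) / fact m"

lemma avg_Suc: "avg (Suc m) F = avg m (\<lambda>u. (\<Sum>j\<le>m. F (u(m:=j))) / Suc m)"
proof -
  have "(\<Sum>u\<in>Wm (Suc m). F u) = (\<Sum>(u,j)\<in>Wm m \<times> {..m}. F (u(m:=j)))"
    unfolding Wm_Suc by (subst sum.reindex[OF inj_Wm_Suc]) (simp add: case_prod_unfold)
  also have "\<dots> = (\<Sum>u\<in>Wm m. \<Sum>j\<le>m. F (u(m:=j)))"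
    by (simp add: sum.cartesian_product)
  finally show ?thesis
    by (simp add: avg_def sum_divide_distrib[symmetric] field_simps)
qed

lemma avg_const [simp]: "avg m (\<lambda>_. c) = c"
  by (simp add: avg_def card_Wm)

lemma avg_mono: "(\<And>u. u \<in> Wm m \<Longrightarrow> F u \<le> G u) \<Longrightarrow> avg m F \<le> avg m G"
  unfolding avg_def by (intro divide_right_mono sum_mono) auto

lemma avg_cong: "(\<And>u. u \<in> Wm m \<Longrightarrow> F u = G u) \<Longrightarrow> avg m F = avg m G"
  unfolding avg_def by (metis (mono_tags, lifting) sum.cong)

lemma avg_cmult: "avg m (\<lambda>u. c * F u) = c * avg m F"
  unfolding avg_def by (simp add: sum_distrib_left)

lemma avg_add: "avg m (\<lambda>u. F u + G u) = avg m F + avg m G"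
  unfolding avg_def by (simp add: sum.distrib add_divide_distrib)

lemma avg_diff: "avg m (\<lambda>u. F u - G u) = avg m F - avg m G"
  unfolding avg_def by (simp add: sum_subtractf diff_divide_distrib)

lemma avg_sum: "finite I \<Longrightarrow> avg m (\<lambda>u. \<Sum>i\<in>I. F i u) = (\<Sum>i\<in>I. avg m (F i))"
  unfolding avg_def by (simp add: sum.swap[of _ I] sum_divide_distrib)

definition dep :: "nat \<Rightarrow> ((nat \<Rightarrow> nat) \<Rightarrow> 'a) \<Rightarrow> bool" where
  "dep m F \<longleftrightarrow> (\<forall>w w'. (\<forall>k<m. w k = w' k) \<longrightarrow> F w = F w')"

definition trm :: "nat \<Rightarrow> (nat \<Rightarrow> nat) \<Rightarrow> (nat \<Rightarrow> nat)" where
  "trm m w = (\<lambda>k. if k < m then w k else 0)"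

definition Vm :: "nat \<Rightarrow> (nat \<Rightarrow> nat) set" where
  "Vm m = {g. \<forall>k. m \<le> k \<longrightarrow> g k = 0}"

lemma countable_Vm: "countable (Vm m)"
proof -
  have "Vm m \<subseteq> (\<lambda>xs k. if k < length xs then xs ! k else 0) ` (UNIV :: nat list set)"
  proof
    fix g assume g: "g \<in> Vm m"
    have "g = (\<lambda>k. if k < length (map g [0..<m]) then map g [0..<m] ! k else 0)"
      using g by (auto simp: Vm_def fun_eq_iff)
    then show "g \<in> (\<lambda>xs k. if k < length xs then xs ! k else 0) ` UNIV" by blast
  qed
  then show ?thesis by (rule countable_subset) simp
qed

lemma trm_Vm: "trm m w \<in> Vm m" by (auto simp: trm_def Vm_def)

lemma dep_trm: "dep m F \<Longrightarrow> F (trm m w) = F w"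
  unfolding dep_def by (metis trm_def)

definition Pk :: "nat \<Rightarrow> nat measure" where
  "Pk k = measure_pmf (pmf_of_set {0..k})"

lemma rrt_space_alt: "rrt_space = PiM UNIV Pk"
  by (simp add: rrt_space_def Pk_def[abs_def])

lemma prob_space_Pk: "prob_space (Pk k)"
  by (simp add: Pk_def measure_pmf.prob_space_axioms)

lemma space_rrt [simp]: "space rrt_space = UNIV"
  by (simp add: rrt_space_def space_PiM)

lemma prob_space_rrt: "prob_space rrt_space"
  unfolding rrt_space_alt by (intro prob_space_PiM prob_space_Pk)

interpretation R: prob_space rrt_space by (rule prob_space_rrt)

lemma meas_coord [measurable]: "(\<lambda>w. w k) \<in> measurable rrt_space (count_space UNIV)"
proof -
  have "(\<lambda>w. w k) \<in> measurable (PiM UNIV Pk) (Pk k)"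
    by (rule measurable_component_singleton) simp
  moreover have "sets (Pk k) = sets (count_space UNIV)" by (simp add: Pk_def)
  ultimately show ?thesis unfolding rrt_space_alt
    using measurable_cong_sets by blast
qed

lemma trm_meas: "trm m \<in> measurable rrt_space (count_space (Vm m))"
proof (subst measurable_count_space_eq_countable[OF countable_Vm], intro conjI ballI)
  show "trm m \<in> space rrt_space \<rightarrow> Vm m" using trm_Vm by auto
  fix a assume a: "a \<in> Vm m"
  have "trm m -` {a} \<inter> space rrt_space = {w \<in> space rrt_space. \<forall>k\<in>{..<m}. w k = a k}"
    using a by (auto simp: trm_def Vm_def fun_eq_iff)
  also have "\<dots> \<in> sets rrt_space" by measurable
  finally show "trm m -` {a} \<inter> space rrt_space \<in> sets rrt_space" .
qed

lemma dep_measurable: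
  assumes "dep m F" "\<And>x. F x \<in> space N"
  shows "F \<in> measurable rrt_space N"
proof -
  have "(\<lambda>w. F (trm m w)) \<in> measurable rrt_space N"
    by (rule measurable_compose[OF trm_meas]) (use assms(2) in auto)
  then show ?thesis using dep_trm[OF assms(1)] by simp
qed

lemma PiE_space_Pk: "PiE UNIV (\<lambda>i. space (Pk i)) = UNIV"
  by (simp add: Pk_def)

lemma cyl_eq: "{w. \<forall>k<m. w k = u k} = prod_emb UNIV Pk {..<m} (PiE {..<m} (\<lambda>k. {u k}))"
proof (rule set_eqI)
  fix w :: "nat \<Rightarrow> nat"
  have "restrict w {..<m} \<in> PiE {..<m} (\<lambda>k. {u k}) \<longleftrightarrow> (\<forall>k\<in>{..<m}. w k \<in> {u k})"
    by (rule restrict_PiE_iff)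
  then show "w \<in> {w. \<forall>k<m. w k = u k} \<longleftrightarrow> w \<in> prod_emb UNIV Pk {..<m} (PiE {..<m} (\<lambda>k. {u k}))"
    unfolding prod_emb_def PiE_space_Pk by (simp add: Ball_def)
qed
lemma prod_inv_fact: "(\<Prod>k<m. 1 / (1 + real k)) = 1 / fact m"
proof (induction m)
  case (Suc m)
  have "(\<Prod>k<Suc m. 1 / (1 + real k)) = (1 / fact m) * (1 / (1 + real m))"
    by (simp add: Suc.IH)
  also have "\<dots> = 1 / fact (Suc m)" by (simp add: fact_Suc)
  finally show ?case .
qed simp

lemma cyl_measure:
  assumes "u \<in> Wm m"
  shows "emeasure rrt_space {w. \<forall>k<m. w k = u k} = ennreal (1 / fact m)"
proof -
  have "emeasure rrt_space {w. \<forall>k<m. w k = u k} = (\<Prod>k<m. emeasure (Pk k) {u k})"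
    unfolding cyl_eq rrt_space_alt
    by (rule emeasure_PiM_emb) (auto simp: Pk_def measure_pmf.prob_space_axioms)
  also have "\<dots> = (\<Prod>k<m. ennreal (1 / (1 + real k)))"
  proof (rule prod.cong)
    fix k assume k: "k \<in> {..<m}"
    then have "u k \<le> k" using assms by (auto simp: Wm_def)
    then have "{0..k} \<inter> {u k} = {u k}" by auto
    then show "emeasure (Pk k) {u k} = ennreal (1 / (1 + real k))"
      unfolding Pk_def by (subst emeasure_pmf_of_set) auto
  qed simp
  also have "\<dots> = ennreal (\<Prod>k<m. 1 / (1 + real k))"
    by (rule prod_ennreal) simp
  finally show ?thesis by (simp add: prod_inv_fact)
qed

lemma cyl_sets: "{w. \<forall>k<m. w k = u k} \<in> sets rrt_space"
proof -
  have "{w. \<forall>k<m. w k = u k} = {w \<in> space rrt_space. \<forall>k\<in>{..<m}. w k = u k}" by auto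
  also have "\<dots> \<in> sets rrt_space" by measurable
  finally show ?thesis .
qed

lemma cyl_prob: "u \<in> Wm m \<Longrightarrow> measure rrt_space {w. \<forall>k<m. w k = u k} = 1 / fact m"
  using cyl_measure by (simp add: R.emeasure_eq_measure)

lemma cylN: "{w. k < w k} = prod_emb UNIV Pk {k} (PiE {k} (\<lambda>_. {k<..}))"
proof (rule set_eqI)
  fix w :: "nat \<Rightarrow> nat"
  have "restrict w {k} \<in> PiE {k} (\<lambda>_. {k<..}) \<longleftrightarrow> (\<forall>i\<in>{k}. w i \<in> {k<..})"
    by (rule restrict_PiE_iff)
  then show "w \<in> {w. k < w k} \<longleftrightarrow> w \<in> prod_emb UNIV Pk {k} (PiE {k} (\<lambda>_. {k<..}))"
    unfolding prod_emb_def PiE_space_Pk by (simp add: Ball_def)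
qed
lemma AE_valid: "AE w in rrt_space. \<forall>k\<in>{..<m}. w k \<le> k"
proof (rule AE_finite_allI)
  fix k
  have "emeasure rrt_space {w. k < w k} = (\<Prod>i\<in>{k}. emeasure (Pk i) {k<..})"
    unfolding cylN rrt_space_alt
    by (rule emeasure_PiM_emb) (auto simp: Pk_def measure_pmf.prob_space_axioms)
  also have "\<dots> = 0"
  proof -
    have "{0..k} \<inter> {k<..} = {}" by auto
    then show ?thesis by (simp add: Pk_def emeasure_pmf_of_set)
  qed
  finally have "emeasure rrt_space {w. k < w k} = 0" .
  moreover have "{w. k < w k} \<in> sets rrt_space"
  proof -
    have "{w. k < w k} = {w \<in> space rrt_space. k < w k}" by auto
    also have "\<dots> \<in> sets rrt_space" by measurable
    finally show ?thesis .
  qed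
  ultimately show "AE w in rrt_space. w k \<le> k"
    by (subst AE_iff_measurable[of "{w. k < w k}"]) auto
qed simp

lemma integral_dep:
  fixes F :: "(nat \<Rightarrow> nat) \<Rightarrow> real"
  assumes "dep m F"
  shows "integrable rrt_space F" "integral\<^sup>L rrt_space F = avg m F"
proof -
  define G where "G w = (\<Sum>u\<in>Wm m. F u * indicator {w. \<forall>k<m. w k = u k} w)" for w
  have FG: "AE w in rrt_space. F w = G w"
    using AE_valid[of m]
  proof eventually_elim
    case (elim w)
    have tw: "trm m w \<in> Wm m" using elim by (auto simp: Wm_def trm_def)
    have ind: "indicator {w. \<forall>k<m. w k = u k} w = (if u = trm m w then 1 else (0::real))"
      if "u \<in> Wm m" for u
      using that by (auto simp: indicator_def Wm_def trm_def fun_eq_iff)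
    have "G w = (\<Sum>u\<in>Wm m. F u * (if u = trm m w then 1 else 0))"
      unfolding G_def by (intro sum.cong) (auto simp: ind)
    also have "\<dots> = F (trm m w)"
      using tw finite_Wm[of m] by (simp add: if_distrib sum.delta' cong: if_cong)
    also have "\<dots> = F w" by (rule dep_trm[OF assms])
    finally show ?case by simp
  qed
  have Fm: "F \<in> borel_measurable rrt_space" by (rule dep_measurable[OF assms]) simp
  have iG: "integrable rrt_space G"
    unfolding G_def
    by (intro Bochner_Integration.integrable_sum integrable_mult_right integrable_real_indicator cyl_sets)
       (simp add: R.emeasure_eq_measure)
  have Gm: "G \<in> borel_measurable rrt_space" using iG by auto
  show "integrable rrt_space F"
    using integrable_cong_AE[OF Fm Gm FG] iG by simp
  have "integral\<^sup>L rrt_space F = integral\<^sup>L rrt_space G"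
    by (rule integral_cong_AE[OF Fm Gm FG])
  also have "\<dots> = (\<Sum>u\<in>Wm m. F u * measure rrt_space {w. \<forall>k<m. w k = u k})"
    unfolding G_def
  proof (subst Bochner_Integration.integral_sum)
    show "integrable rrt_space (\<lambda>w. F u * indicator {w. \<forall>k<m. w k = u k} w)" for u
      by (intro integrable_mult_right integrable_real_indicator cyl_sets) (simp add: R.emeasure_eq_measure)
    show "(\<Sum>u\<in>Wm m. integral\<^sup>L rrt_space (\<lambda>w. F u * indicator {w. \<forall>k<m. w k = u k} w)) =
      (\<Sum>u\<in>Wm m. F u * measure rrt_space {w. \<forall>k<m. w k = u k})"
      by (intro sum.cong refl) (simp add: cyl_sets R.emeasure_eq_measure)
  qed
  also have "\<dots> = avg m F"
    unfolding avg_def by (simp add: cyl_prob sum_divide_distrib)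
  finally show "integral\<^sup>L rrt_space F = avg m F" .
qed

lemma prob_dep:
  assumes "dep m P"
  shows "{w. P w} \<in> sets rrt_space"
    "measure rrt_space {w. P w} = avg m (\<lambda>w. if P w then 1 else 0)"
proof -
  have d: "dep m (\<lambda>w. if P w then 1 else (0::real))"
    using assms by (auto simp: dep_def)
  have "(\<lambda>w. if P w then 1 else (0::real)) \<in> borel_measurable rrt_space"
    by (rule dep_measurable[OF d]) simp
  then have "(\<lambda>w. if P w then 1 else (0::real)) -` {1} \<inter> space rrt_space \<in> sets rrt_space"
    by (rule measurable_sets) simp
  moreover have "(\<lambda>w. if P w then 1 else (0::real)) -` {1} \<inter> space rrt_space = {w. P w}"
    by (auto split: if_splits)
  ultimately show S: "{w. P w} \<in> sets rrt_space" by simp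
  have "measure rrt_space {w. P w} = integral\<^sup>L rrt_space (indicator {w. P w})"
    using S by (simp add: R.emeasure_eq_measure)
  also have "\<dots> = integral\<^sup>L rrt_space (\<lambda>w. if P w then 1 else (0::real))"
    by (intro Bochner_Integration.integral_cong) (auto simp: indicator_def)
  also have "\<dots> = avg m (\<lambda>w. if P w then 1 else 0)"
    by (rule integral_dep(2)[OF d])
  finally show "measure rrt_space {w. P w} = avg m (\<lambda>w. if P w then 1 else 0)" .
qed

lemma hoeffding_fin:
  fixes g :: "nat \<Rightarrow> real"
  assumes bnd: "\<And>j. j \<le> m \<Longrightarrow> a \<le> g j \<and> g j \<le> a + D" and l: "l \<ge> 0"
  shows "(\<Sum>j\<le>m. exp (l * (g j - (\<Sum>i\<le>m. g i) / Suc m))) / Suc m \<le> exp (l\<^sup>2 * D\<^sup>2 / 8)"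
proof (cases "l = 0")
  case True then show ?thesis by simp
next
  case False
  with l have l0: "l > 0" by simp
  let ?M = "measure_pmf (pmf_of_set {..m})"
  interpret I: interval_bounded_random_variable ?M g a "a + D"
  proof
    show "g \<in> borel_measurable ?M" by simp
    show "AE x in ?M. g x \<in> {a..a + D}"
      by (rule AE_pmfI) (use bnd in auto)
  qed
  have E: "measure_pmf.expectation (pmf_of_set {..m}) g = (\<Sum>i\<le>m. g i) / Suc m"
    by (subst integral_pmf_of_set) auto
  have "nn_integral ?M (\<lambda>x. exp (l * (g x - measure_pmf.expectation (pmf_of_set {..m}) g))) \<le> ennreal (exp (l\<^sup>2 * (a + D - a)\<^sup>2 / 8))"
    by (rule I.Hoeffdings_lemma_nn_integral[OF l0])
  also have "nn_integral ?M (\<lambda>x. exp (l * (g x - measure_pmf.expectation (pmf_of_set {..m}) g))) =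
     ennreal (measure_pmf.expectation (pmf_of_set {..m}) (\<lambda>x. exp (l * (g x - measure_pmf.expectation (pmf_of_set {..m}) g))))"
    by (rule nn_integral_eq_integral) (auto intro!: integrable_measure_pmf_finite)
  also have "measure_pmf.expectation (pmf_of_set {..m}) (\<lambda>x. exp (l * (g x - measure_pmf.expectation (pmf_of_set {..m}) g))) =
      (\<Sum>j\<le>m. exp (l * (g j - (\<Sum>i\<le>m. g i) / Suc m))) / Suc m"
    unfolding E by (subst integral_pmf_of_set) auto
  finally show ?thesis by (subst (asm) ennreal_le_iff) auto
qed

definition BD :: "nat \<Rightarrow> real \<Rightarrow> ((nat \<Rightarrow> nat) \<Rightarrow> real) \<Rightarrow> bool" where
  "BD m D F \<longleftrightarrow> (\<forall>u\<in>Wm m. \<forall>k<m. \<forall>j\<le>k. \<bar>F (u(k:=j)) - F u\<bar> \<le> D)"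

lemma Wm_upd: "u \<in> Wm m \<Longrightarrow> k < m \<Longrightarrow> j \<le> k \<Longrightarrow> u(k:=j) \<in> Wm m"
  by (auto simp: Wm_def)

lemma Wm_Suc_upd: "u \<in> Wm m \<Longrightarrow> j \<le> m \<Longrightarrow> u(m:=j) \<in> Wm (Suc m)"
  by (auto simp: Wm_def)

lemma avg_0: "avg 0 F = F (\<lambda>_. 0)"
  by (simp add: avg_def Wm_0)

lemma BD_step:
  assumes "BD (Suc m) D F"
  shows "BD m D (\<lambda>u. (\<Sum>j\<le>m. F (u(m:=j))) / Suc m)"
  unfolding BD_def
proof (intro ballI allI impI)
  fix u k i assume u: "u \<in> Wm m" and k: "k < m" and i: "i \<le> k"
  have "abs ((\<Sum>j\<le>m. F ((u(k:=i))(m:=j))) - (\<Sum>j\<le>m. F (u(m:=j))))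
        = abs (\<Sum>j\<le>m. F ((u(m:=j))(k:=i)) - F (u(m:=j)))"
    using k by (simp add: sum_subtractf fun_upd_twist)
  also have "\<dots> \<le> (\<Sum>j\<le>m. \<bar>F ((u(m:=j))(k:=i)) - F (u(m:=j))\<bar>)"
    by (rule sum_abs)
  also have "\<dots> \<le> (\<Sum>j\<le>m. D)"
  proof (rule sum_mono)
    fix j assume "j \<in> {..m}"
    then have "u(m:=j) \<in> Wm (Suc m)" using u by (intro Wm_Suc_upd) auto
    then show "\<bar>F ((u(m:=j))(k:=i)) - F (u(m:=j))\<bar> \<le> D"
      using assms k i unfolding BD_def by auto
  qed
  finally have "\<bar>(\<Sum>j\<le>m. F ((u(k:=i))(m:=j))) - (\<Sum>j\<le>m. F (u(m:=j)))\<bar> \<le> Suc m * D" by simp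
  then show "\<bar>(\<Sum>j\<le>m. F ((u(k:=i))(m:=j))) / Suc m - (\<Sum>j\<le>m. F (u(m:=j))) / Suc m\<bar> \<le> D"
    by (simp add: diff_divide_distrib[symmetric] field_simps)
qed

lemma mcdiarmid_exp:
  assumes "BD m D F" "l \<ge> 0"
  shows "avg m (\<lambda>u. exp (l * (F u - avg m F))) \<le> exp (l\<^sup>2 * D\<^sup>2 * m / 8)"
  using assms(1)
proof (induction m arbitrary: F)
  case 0 then show ?case by (simp add: avg_0)
next
  case (Suc m)
  define G where "G u = (\<Sum>j\<le>m. F (u(m:=j))) / Suc m" for u
  have BG: "BD m D G" unfolding G_def by (rule BD_step[OF Suc.prems])
  have aF: "avg (Suc m) F = avg m G" unfolding G_def by (rule avg_Suc)
  have "avg (Suc m) (\<lambda>u. exp (l * (F u - avg m G))) =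
        avg m (\<lambda>u. (\<Sum>j\<le>m. exp (l * (F (u(m:=j)) - G u))) / Suc m * exp (l * (G u - avg m G)))"
    unfolding avg_Suc
  proof (rule avg_cong)
    fix u
    have "(\<Sum>j\<le>m. exp (l * (F (u(m:=j)) - avg m G))) =
          (\<Sum>j\<le>m. exp (l * (F (u(m:=j)) - G u)) * exp (l * (G u - avg m G)))"
      by (intro sum.cong refl) (simp add: exp_add[symmetric] algebra_simps)
    then show "(\<Sum>j\<le>m. exp (l * (F (u(m:=j)) - avg m G))) / Suc m =
       (\<Sum>j\<le>m. exp (l * (F (u(m:=j)) - G u))) / Suc m * exp (l * (G u - avg m G))"
      by (simp add: sum_distrib_right)
  qed
  also have "\<dots> \<le> avg m (\<lambda>u. exp (l\<^sup>2 * D\<^sup>2 / 8) * exp (l * (G u - avg m G)))"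
  proof (rule avg_mono, rule mult_right_mono)
    fix u assume u: "u \<in> Wm m"
    define g where "g j = F (u(m:=j))" for j
    define a where "a = Min (g ` {..m})"
    have "a \<in> g ` {..m}" unfolding a_def by (intro Min_in) auto
    then obtain j0 where j0: "j0 \<le> m" "g j0 = a" by auto
    have bnd: "a \<le> g j \<and> g j \<le> a + D" if "j \<le> m" for j
    proof
      show "a \<le> g j" unfolding a_def using that by (intro Min_le) auto
      have "u(m:=j0) \<in> Wm (Suc m)" using u j0 by (intro Wm_Suc_upd)
      then have "\<forall>k<Suc m. \<forall>j'\<le>k. \<bar>F ((u(m:=j0))(k:=j')) - F (u(m:=j0))\<bar> \<le> D"
        using Suc.prems unfolding BD_def by blast
      then have "\<bar>F ((u(m:=j0))(m:=j)) - F (u(m:=j0))\<bar> \<le> D"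
        using that by blast
      then show "g j \<le> a + D" using j0 by (simp add: g_def)
    qed
    have "G u = (\<Sum>i\<le>m. g i) / Suc m" by (simp add: G_def g_def)
    then show "(\<Sum>j\<le>m. exp (l * (F (u(m:=j)) - G u))) / Suc m \<le> exp (l\<^sup>2 * D\<^sup>2 / 8)"
      using hoeffding_fin[of m a g D l, OF bnd assms(2)] by (simp add: g_def)
  qed simp
  also have "\<dots> = exp (l\<^sup>2 * D\<^sup>2 / 8) * avg m (\<lambda>u. exp (l * (G u - avg m G)))"
    by (rule avg_cmult)
  also have "\<dots> \<le> exp (l\<^sup>2 * D\<^sup>2 / 8) * exp (l\<^sup>2 * D\<^sup>2 * m / 8)"
    by (intro mult_left_mono Suc.IH BG) auto
  also have "\<dots> = exp (l\<^sup>2 * D\<^sup>2 * Suc m / 8)"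
    by (simp add: exp_add[symmetric] algebra_simps add_divide_distrib)
  finally show ?case unfolding aF .
qed

lemma mcdiarmid_tail:
  assumes "BD m D F" "l \<ge> 0"
  shows "avg m (\<lambda>u. if t \<le> F u - avg m F then 1 else 0) \<le> exp (- l * t + l\<^sup>2 * D\<^sup>2 * m / 8)"
proof -
  have "avg m (\<lambda>u. if t \<le> F u - avg m F then 1 else 0) \<le>
        avg m (\<lambda>u. exp (- l * t) * exp (l * (F u - avg m F)))"
  proof (rule avg_mono)
    fix u
    have "exp (- l * t) * exp (l * (F u - avg m F)) = exp (l * (F u - avg m F - t))"
      by (simp add: exp_add[symmetric] algebra_simps)
    moreover have "t \<le> F u - avg m F \<Longrightarrow> 1 \<le> exp (l * (F u - avg m F - t))"
      using assms(2) by simp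
    ultimately show "(if t \<le> F u - avg m F then 1 else 0) \<le> exp (- l * t) * exp (l * (F u - avg m F))"
      by auto
  qed
  also have "\<dots> = exp (- l * t) * avg m (\<lambda>u. exp (l * (F u - avg m F)))"
    by (rule avg_cmult)
  also have "\<dots> \<le> exp (- l * t) * exp (l\<^sup>2 * D\<^sup>2 * m / 8)"
    by (intro mult_left_mono mcdiarmid_exp assms) auto
  also have "\<dots> = exp (- l * t + l\<^sup>2 * D\<^sup>2 * m / 8)" by (simp add: mult_exp_exp)
  finally show ?thesis .
qed

lemma BD_uminus:
  assumes "BD m D F" shows "BD m D (\<lambda>u. - F u)"
  unfolding BD_def
proof (intro ballI allI impI)
  fix u k j assume "u \<in> Wm m" "k < m" "j \<le> k"
  then have "\<bar>F (u(k:=j)) - F u\<bar> \<le> D" using assms unfolding BD_def by blast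
  moreover have "\<bar>- F (u(k:=j)) - - F u\<bar> = \<bar>F (u(k:=j)) - F u\<bar>" by arith
  ultimately show "\<bar>- F (u(k:=j)) - - F u\<bar> \<le> D" by simp
qed

lemma avg_uminus: "avg m (\<lambda>u. - F u) = - avg m F"
  using avg_cmult[of m "-1" F] by simp

lemma mcdiarmid_abs:
  assumes "BD m D F" "l \<ge> 0"
  shows "avg m (\<lambda>u. if t \<le> \<bar>F u - avg m F\<bar> then 1 else 0) \<le> 2 * exp (- l * t + l\<^sup>2 * D\<^sup>2 * m / 8)"
proof -
  have "avg m (\<lambda>u. if t \<le> \<bar>F u - avg m F\<bar> then 1 else 0) \<le>
        avg m (\<lambda>u. (if t \<le> F u - avg m F then 1 else 0) + (if t \<le> (- F u) - avg m (\<lambda>u. - F u) then 1 else 0))"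
    by (rule avg_mono) (auto simp: avg_uminus)
  also have "\<dots> \<le> exp (- l * t + l\<^sup>2 * D\<^sup>2 * m / 8) + exp (- l * t + l\<^sup>2 * D\<^sup>2 * m / 8)"
    unfolding avg_add by (intro add_mono mcdiarmid_tail BD_uminus assms)
  finally show ?thesis by simp
qed

lemma alg_div3:
  fixes M N A B c :: real assumes N: "N = M + 1" and M: "M \<ge> 0"
  shows "(M * A + B + N * c) / N = M / N * A + 1 / N * B + c"
proof -
  have M1: "N \<noteq> 0" using N M by linarith
  have "(M * A + B + N * c) / N = M * A / N + B / N + N * c / N"
    by (simp only: add_divide_distrib)
  also have "N * c / N = c" by (rule nonzero_mult_div_cancel_left[OF M1])
  finally show ?thesis by simp
qed

lemma alg_step1:
  fixes M N P A B Q :: real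
  assumes N: "N = M + 1" and P: "P = M + 2" and M: "M \<ge> 0" and Q: "Q > 0"
    and hA: "\<bar>A - N / (2 * Q)\<bar> \<le> 1" and hB: "\<bar>B - N / Q\<bar> \<le> 1"
  shows "\<bar>(M * A + B) / N - P / (2 * Q)\<bar> \<le> 1"
proof -
  define a where "a = A - N / (2 * Q)"
  define b where "b = B - N / Q"
  have M1: "N \<noteq> 0" "N > 0" using M N by linarith+
  have e1: "M * A + B = (M * a + b) + N * (P / (2 * Q))"
    unfolding a_def b_def N P using Q by (simp add: field_simps)
  have "(M * A + B) / N = (M * a + b) / N + N * (P / (2 * Q)) / N"
    unfolding e1 by (simp only: add_divide_distrib)
  also have "N * (P / (2 * Q)) / N = P / (2 * Q)" by (rule nonzero_mult_div_cancel_left[OF M1(1)])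
  finally have e2: "(M * A + B) / N - P / (2 * Q) = (M * a + b) / N" by simp
  have "\<bar>M * a + b\<bar> \<le> M * 1 + 1"
  proof -
    have "\<bar>M * a + b\<bar> \<le> \<bar>M * a\<bar> + \<bar>b\<bar>" by (rule abs_triangle_ineq)
    also have "\<bar>M * a\<bar> = M * \<bar>a\<bar>" using M by (simp add: abs_mult)
    also have "M * \<bar>a\<bar> + \<bar>b\<bar> \<le> M * 1 + 1"
      using hA hB M unfolding a_def b_def by (intro add_mono mult_left_mono) auto
    finally show ?thesis .
  qed
  then have "\<bar>M * a + b\<bar> / N \<le> 1" using M1 N by (simp add: pos_divide_le_eq[OF M1(2)])
  moreover have "\<bar>(M * a + b) / N\<bar> = \<bar>M * a + b\<bar> / N" using M1 by (simp add: abs_divide abs_of_pos[OF M1(2)])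
  ultimately have "\<bar>(M * a + b) / N\<bar> \<le> 1" by linarith
  then show ?thesis unfolding e2 .
qed

lemma alg_step0:
  fixes M N P A :: real
  assumes N: "N = M + 1" and P: "P = M + 2" and M: "M \<ge> 0" and hA: "\<bar>A - N / 2\<bar> \<le> 1"
  shows "\<bar>M * A / N + 1 - P / 2\<bar> \<le> 1"
proof -
  define a where "a = A - N / 2"
  have M1: "N \<noteq> 0" "N > 0" using M N by linarith+
  have e1: "M * A = M * a + N * (M / 2)" unfolding a_def N by (simp add: algebra_simps)
  have "M * A / N = M * a / N + N * (M / 2) / N"
    unfolding e1 by (simp only: add_divide_distrib)
  also have "N * (M / 2) / N = M / 2" by (rule nonzero_mult_div_cancel_left[OF M1(1)])
  finally have e2a: "M * A / N = M * a / N + M / 2" .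
  have e2b: "M * a / N = M / N * a" by simp
  have e2c: "M / 2 + 1 - P / 2 = 0" unfolding P by (simp add: field_simps)
  have e2: "M * A / N + 1 - P / 2 = M / N * a" using e2a e2b e2c by linarith
  have "\<bar>M / N * a\<bar> = M / N * \<bar>a\<bar>" using M M1 by (simp add: abs_mult)
  also have "\<dots> \<le> 1 * 1" using hA M M1 N unfolding a_def by (intro mult_mono) auto
  finally show ?thesis unfolding e2 by simp
qed

lemma alg_Z:
  fixes M N P a z :: real
  assumes N: "N = M + 1" and P: "P = M + 2" and M: "M \<ge> 0" and a: "1 \<le> a" "a < 2" and z: "z \<le> N / (2 - a)"
  shows "(M + a) / N * z + 1 \<le> P / (2 - a)"
proof -
  have M1: "N > 0" "N \<noteq> 0" using M N by linarith+
  have "(M + a) / N * z \<le> (M + a) / N * (N / (2 - a))"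
    using M a M1 z by (intro mult_left_mono) auto
  also have "(M + a) / N * (N / (2 - a)) = (M + a) / (2 - a)" using M1 by simp
  finally have "(M + a) / N * z + 1 \<le> (M + a) / (2 - a) + 1" by simp
  also have "(M + a) / (2 - a) + 1 = P / (2 - a)" using a unfolding P by (simp add: field_simps)
  finally show ?thesis .
qed

definition Nr :: "nat \<Rightarrow> nat \<Rightarrow> (nat \<Rightarrow> nat) \<Rightarrow> real" where
  "Nr n x w = (\<Sum>v<n. if rrt_outdeg w n v = x then 1 else 0)"

definition Zr :: "real \<Rightarrow> nat \<Rightarrow> (nat \<Rightarrow> nat) \<Rightarrow> real" where
  "Zr a n w = (\<Sum>v<n. a ^ rrt_outdeg w n v)"

lemma outdeg_finite [simp]: "finite {k. Suc k < n \<and> w k = v}"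
  by (rule finite_subset[of _ "{..<n}"]) auto

lemma outdeg_le: "rrt_outdeg w n v \<le> n - 1"
proof -
  have "rrt_outdeg w n v \<le> card {..<n-1}"
    unfolding rrt_outdeg_def by (rule card_mono) auto
  then show ?thesis by simp
qed

lemma outdeg_mono: "n \<le> n' \<Longrightarrow> rrt_outdeg w n v \<le> rrt_outdeg w n' v"
  unfolding rrt_outdeg_def by (rule card_mono) auto

lemma dep_outdeg: "n \<le> Suc m \<Longrightarrow> w \<in> UNIV \<Longrightarrow> (\<forall>k<m. w k = w' k) \<Longrightarrow> rrt_outdeg w n v = rrt_outdeg w' n v"
proof -
  assume n: "n \<le> Suc m" and e: "\<forall>k<m. w k = w' k"
  have "{k. Suc k < n \<and> w k = v} = {k. Suc k < n \<and> w' k = v}"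
    using n e by auto
  then show ?thesis by (simp add: rrt_outdeg_def)
qed

lemma dep_Nr:
  assumes n: "n \<le> Suc m" shows "dep m (Nr n x)"
  unfolding dep_def
proof (intro allI impI)
  fix w w' :: "nat \<Rightarrow> nat" assume e: "\<forall>k<m. w k = w' k"
  have "rrt_outdeg w n v = rrt_outdeg w' n v" for v using dep_outdeg[OF n _ e] by simp
  then show "Nr n x w = Nr n x w'" by (simp add: Nr_def)
qed

lemma dep_Zr:
  assumes n: "n \<le> Suc m" shows "dep m (Zr a n)"
  unfolding dep_def
proof (intro allI impI)
  fix w w' :: "nat \<Rightarrow> nat" assume e: "\<forall>k<m. w k = w' k"
  have "rrt_outdeg w n v = rrt_outdeg w' n v" for v using dep_outdeg[OF n _ e] by simp
  then show "Zr a n w = Zr a n w'" by (simp add: Zr_def)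
qed

lemma outdeg_upd:
  "rrt_outdeg (u(m:=j)) (Suc (Suc m)) v = rrt_outdeg u (Suc m) v + (if v = j then 1 else 0)"
proof (cases "v = j")
  case True
  have "{k. Suc k < Suc (Suc m) \<and> (u(m:=j)) k = v} = insert m {k. Suc k < Suc m \<and> u k = v}"
    using True by auto
  then show ?thesis using True by (simp add: rrt_outdeg_def)
next
  case False
  have "{k. Suc k < Suc (Suc m) \<and> (u(m:=j)) k = v} = {k. Suc k < Suc m \<and> u k = v}"
    using False by auto
  then show ?thesis using False by (simp add: rrt_outdeg_def)
qed

lemma outdeg_new:
  assumes "u \<in> Wm m" "j \<le> m"
  shows "rrt_outdeg (u(m:=j)) (Suc (Suc m)) (Suc m) = 0"
proof -
  have ne: "(u(m:=j)) k \<noteq> Suc m" if "k \<le> m" for k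
  proof (cases "k = m")
    case True then show ?thesis using assms(2) by simp
  next
    case False
    then have "k < m" using that by simp
    then have "u k \<le> k" using assms(1) by (simp add: Wm_def)
    then show ?thesis using False \<open>k < m\<close> by simp
  qed
  have "{k. Suc k < Suc (Suc m) \<and> (u(m:=j)) k = Suc m} = {}"
    using ne by (auto simp: less_Suc_eq_le)
  then show ?thesis by (simp add: rrt_outdeg_def)
qed

lemma outdeg_self:
  assumes "u \<in> Wm m"
  shows "rrt_outdeg u (Suc m) (Suc m) = 0"
proof -
  have "{k. Suc k < Suc m \<and> u k = Suc m} = {}"
    using assms by (auto simp: Wm_def)
  then show ?thesis by (simp add: rrt_outdeg_def)
qed

lemma Nr_shift: "(\<Sum>v<n. if rrt_outdeg u n v + 1 = x then 1 else (0::real)) = (if x = 0 then 0 else Nr n (x - 1) u)"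
  by (cases x) (auto simp: Nr_def)

lemma sum_j_swap:
  fixes \<phi> :: "nat \<Rightarrow> real"
  shows "(\<Sum>j\<le>m. \<Sum>v<Suc m. \<phi> (d v + (if v = j then 1 else 0))) =
         (\<Sum>v<Suc m. real m * \<phi> (d v) + \<phi> (d v + 1))"
proof -
  have "(\<Sum>j\<le>m. \<Sum>v<Suc m. \<phi> (d v + (if v = j then 1 else 0))) =
        (\<Sum>v<Suc m. \<Sum>j\<le>m. \<phi> (d v + (if v = j then 1 else 0)))"
    by (rule sum.swap)
  also have "\<dots> = (\<Sum>v<Suc m. real m * \<phi> (d v) + \<phi> (d v + 1))"
  proof (rule sum.cong[OF refl])
    fix v assume "v \<in> {..<Suc m}"
    then have v: "v \<in> {..m}" by auto
    have "(\<Sum>j\<le>m. \<phi> (d v + (if v = j then 1 else 0))) =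
          \<phi> (d v + 1) + (\<Sum>j\<in>{..m} - {v}. \<phi> (d v + (if v = j then 1 else 0)))"
      using v by (subst sum.remove[of _ v]) auto
    also have "(\<Sum>j\<in>{..m} - {v}. \<phi> (d v + (if v = j then 1 else 0))) = (\<Sum>j\<in>{..m} - {v}. \<phi> (d v))"
      by (rule sum.cong) auto
    also have "\<dots> = real m * \<phi> (d v)" using v by simp
    finally show "(\<Sum>j\<le>m. \<phi> (d v + (if v = j then 1 else 0))) = real m * \<phi> (d v) + \<phi> (d v + 1)"
      by simp
  qed
  finally show ?thesis .
qed

lemma step_sum:
  fixes \<phi> :: "nat \<Rightarrow> real"
  assumes u: "u \<in> Wm m"
  shows "(\<Sum>j\<le>m. \<Sum>v<Suc (Suc m). \<phi> (rrt_outdeg (u(m:=j)) (Suc (Suc m)) v)) =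
     (\<Sum>v<Suc m. real m * \<phi> (rrt_outdeg u (Suc m) v) + \<phi> (rrt_outdeg u (Suc m) v + 1)) + real (Suc m) * \<phi> 0"
proof -
  have "(\<Sum>j\<le>m. \<Sum>v<Suc (Suc m). \<phi> (rrt_outdeg (u(m:=j)) (Suc (Suc m)) v)) =
        (\<Sum>j\<le>m. (\<Sum>v<Suc m. \<phi> (rrt_outdeg u (Suc m) v + (if v = j then 1 else 0))) + \<phi> 0)"
    by (intro sum.cong refl) (simp add: outdeg_upd outdeg_new[OF u] outdeg_self[OF u])
  also have "\<dots> = (\<Sum>j\<le>m. \<Sum>v<Suc m. \<phi> (rrt_outdeg u (Suc m) v + (if v = j then 1 else 0))) + real (Suc m) * \<phi> 0"
    by (simp add: sum.distrib)
  also have "\<dots> = (\<Sum>v<Suc m. real m * \<phi> (rrt_outdeg u (Suc m) v) + \<phi> (rrt_outdeg u (Suc m) v + 1)) + real (Suc m) * \<phi> 0"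
    by (subst sum_j_swap) simp
  finally show ?thesis .
qed

definition eN :: "nat \<Rightarrow> nat \<Rightarrow> real" where "eN m x = avg m (Nr (Suc m) x)"

lemma eN_Suc:
  "eN (Suc m) x = (real m * eN m x + (if x = 0 then 0 else eN m (x - 1))) / Suc m + (if x = 0 then 1 else 0)"
proof -
  let ?\<phi> = "\<lambda>y. if y = x then 1 else (0::real)"
  have "eN (Suc m) x = avg m (\<lambda>u. (\<Sum>j\<le>m. Nr (Suc (Suc m)) x (u(m:=j))) / Suc m)"
    unfolding eN_def by (rule avg_Suc)
  also have "\<dots> = avg m (\<lambda>u. real m / Suc m * Nr (Suc m) x u + 1 / Suc m * (if x = 0 then 0 else Nr (Suc m) (x - 1) u)
                 + (if x = 0 then 1 else 0))"
  proof (rule avg_cong)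
    fix u assume u: "u \<in> Wm m"
    have "(\<Sum>j\<le>m. Nr (Suc (Suc m)) x (u(m:=j))) =
       (\<Sum>v<Suc m. real m * ?\<phi> (rrt_outdeg u (Suc m) v) + ?\<phi> (rrt_outdeg u (Suc m) v + 1)) + real (Suc m) * ?\<phi> 0"
      unfolding Nr_def using step_sum[OF u, of ?\<phi>] by simp
    also have "(\<Sum>v<Suc m. real m * ?\<phi> (rrt_outdeg u (Suc m) v) + ?\<phi> (rrt_outdeg u (Suc m) v + 1)) =
        real m * (\<Sum>v<Suc m. ?\<phi> (rrt_outdeg u (Suc m) v)) + (\<Sum>v<Suc m. ?\<phi> (rrt_outdeg u (Suc m) v + 1))"
      by (simp only: sum.distrib sum_distrib_left)
    also have "(\<Sum>v<Suc m. ?\<phi> (rrt_outdeg u (Suc m) v + 1)) = (if x = 0 then 0 else Nr (Suc m) (x - 1) u)"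
      by (rule Nr_shift)
    also have "(\<Sum>v<Suc m. ?\<phi> (rrt_outdeg u (Suc m) v)) = Nr (Suc m) x u"
      by (simp only: Nr_def)
    finally have E: "(\<Sum>j\<le>m. Nr (Suc (Suc m)) x (u(m:=j))) =
       real m * Nr (Suc m) x u + (if x = 0 then 0 else Nr (Suc m) (x - 1) u) + real (Suc m) * ?\<phi> 0" .
    have phi0: "?\<phi> 0 = (if x = 0 then 1 else 0)" by auto
    show "(\<Sum>j\<le>m. Nr (Suc (Suc m)) x (u(m:=j))) / Suc m =
      real m / Suc m * Nr (Suc m) x u + 1 / Suc m * (if x = 0 then 0 else Nr (Suc m) (x - 1) u) + (if x = 0 then 1 else 0)"
      unfolding E phi0 by (rule alg_div3) simp_all
  qed
  also have "\<dots> = real m / Suc m * eN m x + 1 / Suc m * (if x = 0 then 0 else eN m (x - 1)) + (if x = 0 then 1 else 0)"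
    unfolding avg_add avg_cmult avg_const eN_def by (cases "x = 0") (simp_all add: avg_cmult)
  finally show ?thesis by (simp add: add_divide_distrib)
qed

lemma eN_0: "eN 0 x = (if x = 0 then 1 else 0)"
  by (simp add: eN_def avg_0 Nr_def rrt_outdeg_def)

lemma eN_bound: "\<bar>eN m x - real (Suc m) / 2 ^ (x + 1)\<bar> \<le> 1"
proof (induction m arbitrary: x)
  case 0
  show ?case
  proof (cases "x = 0")
    case False
    have h: "(1::real) \<le> 2 * 2 ^ x" by (induction x) auto
    then show ?thesis using False h by (simp add: eN_0)
  qed (simp add: eN_0)
next
  case (Suc m)
  show ?case
  proof (cases x)
    case 0
    have e: "eN (Suc m) x = real m * eN m 0 / real (Suc m) + 1" using eN_Suc[of m x] 0 by simp
    have p: "(2::real) ^ (x + 1) = 2" using 0 by simp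
    show ?thesis unfolding e p
      by (rule alg_step0) (use Suc.IH[of 0] 0 in simp_all)
  next
    case (Suc y)
    have e: "eN (Suc m) x = (real m * eN m x + eN m y) / real (Suc m)" using eN_Suc[of m x] Suc by simp
    have p: "(2::real) ^ (x + 1) = 2 * 2 ^ (y + 1)" using Suc by simp
    show ?thesis unfolding e p
      by (rule alg_step1) (use Suc.IH[of x] Suc.IH[of y] p in simp_all)
  qed
qed

definition eZ :: "real \<Rightarrow> nat \<Rightarrow> real" where "eZ a m = avg m (Zr a (Suc m))"

lemma eZ_Suc: "eZ a (Suc m) = (real m + a) / Suc m * eZ a m + 1"
proof -
  have "eZ a (Suc m) = avg m (\<lambda>u. (\<Sum>j\<le>m. Zr a (Suc (Suc m)) (u(m:=j))) / Suc m)"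
    unfolding eZ_def by (rule avg_Suc)
  also have "\<dots> = avg m (\<lambda>u. (real m + a) / Suc m * Zr a (Suc m) u + 1)"
  proof (rule avg_cong)
    fix u assume u: "u \<in> Wm m"
    have "(\<Sum>j\<le>m. Zr a (Suc (Suc m)) (u(m:=j))) =
       (\<Sum>v<Suc m. real m * a ^ (rrt_outdeg u (Suc m) v) + a ^ (rrt_outdeg u (Suc m) v + 1)) + real (Suc m) * a ^ 0"
      unfolding Zr_def using step_sum[OF u, of "\<lambda>y. a ^ y"] by simp
    also have "\<dots> = (real m + a) * Zr a (Suc m) u + real (Suc m)"
      unfolding Zr_def by (simp add: sum.distrib sum_distrib_left algebra_simps)
    finally show "(\<Sum>j\<le>m. Zr a (Suc (Suc m)) (u(m:=j))) / Suc m = (real m + a) / Suc m * Zr a (Suc m) u + 1"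
      by (simp add: field_simps)
  qed
  also have "\<dots> = (real m + a) / Suc m * eZ a m + 1"
    unfolding avg_add avg_cmult avg_const eZ_def by simp
  finally show ?thesis .
qed

lemma eZ_bound:
  assumes "1 \<le> a" "a < 2"
  shows "eZ a m \<le> real (Suc m) / (2 - a)"
proof (induction m)
  case 0
  have "eZ a 0 = 1" by (simp add: eZ_def avg_0 Zr_def rrt_outdeg_def)
  then show ?case using assms by (simp add: field_simps)
next
  case (Suc m)
  show ?case unfolding eZ_Suc
    by (rule alg_Z) (use assms Suc.IH in simp_all)
qed

lemma sum_two_diff:
  fixes g h :: "nat \<Rightarrow> real"
  assumes "finite A" "\<And>v. v \<in> A \<Longrightarrow> v \<noteq> a \<Longrightarrow> v \<noteq> b \<Longrightarrow> g v = h v" "\<And>v. \<bar>g v - h v\<bar> \<le> 1"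
  shows "\<bar>sum g A - sum h A\<bar> \<le> 2"
proof -
  have "sum g A - sum h A = (\<Sum>v\<in>A. g v - h v)" by (simp add: sum_subtractf)
  also have "\<dots> = (\<Sum>v\<in>A \<inter> {a,b}. g v - h v) + (\<Sum>v\<in>A - {a,b}. g v - h v)"
    using assms(1) by (rule sum.Int_Diff)
  also have "(\<Sum>v\<in>A - {a,b}. g v - h v) = 0" using assms(2) by (intro sum.neutral) auto
  finally have "\<bar>sum g A - sum h A\<bar> \<le> (\<Sum>v\<in>A \<inter> {a,b}. \<bar>g v - h v\<bar>)"
    by (simp add: sum_abs)
  also have "\<dots> \<le> (\<Sum>v\<in>A \<inter> {a,b}. 1)" by (intro sum_mono assms(3))
  also have "\<dots> = card (A \<inter> {a,b})" by simp
  also have "card (A \<inter> {a,b}) \<le> card {a,b}" by (intro card_mono) auto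
  also have "card {a,b} \<le> 2" by (simp add: card_insert_if)
  finally show ?thesis by simp
qed

lemma outdeg_upd_other:
  "v \<noteq> u k \<Longrightarrow> v \<noteq> i \<Longrightarrow> rrt_outdeg (u(k:=i)) n v = rrt_outdeg u n v"
proof -
  assume "v \<noteq> u k" "v \<noteq> i"
  then have "{k'. Suc k' < n \<and> (u(k:=i)) k' = v} = {k'. Suc k' < n \<and> u k' = v}" by auto
  then show ?thesis by (simp add: rrt_outdeg_def)
qed

lemma BD_Nr: "BD m 2 (Nr n x)"
  unfolding BD_def Nr_def
proof (intro ballI allI impI)
  fix u k i assume "u \<in> Wm m" "k < m" "i \<le> k"
  show "\<bar>(\<Sum>v<n. if rrt_outdeg (u(k:=i)) n v = x then 1 else 0) - (\<Sum>v<n. if rrt_outdeg u n v = x then 1 else (0::real))\<bar> \<le> 2"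
    by (rule sum_two_diff[of _ "u k" i]) (auto simp: outdeg_upd_other)
qed

lemma Zr_mono: "1 \<le> a \<Longrightarrow> n \<le> n' \<Longrightarrow> Zr a n w \<le> Zr a n' w"
proof -
  assume a: "1 \<le> a" and n: "n \<le> n'"
  have "Zr a n w \<le> (\<Sum>v<n. a ^ rrt_outdeg w n' v)"
    unfolding Zr_def by (intro sum_mono power_increasing outdeg_mono n a)
  also have "\<dots> \<le> (\<Sum>v<n'. a ^ rrt_outdeg w n' v)"
    using a n by (intro sum_mono2) auto
  finally show ?thesis by (simp add: Zr_def)
qed

lemma Zr_nonneg: "0 \<le> a \<Longrightarrow> 0 \<le> Zr a n w"
  unfolding Zr_def by (intro sum_nonneg) auto

lemma markov_avg:
  assumes "s > 0" "\<And>u. u \<in> Wm m \<Longrightarrow> F u \<ge> 0"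
  shows "avg m (\<lambda>u. if s \<le> F u then 1 else 0) \<le> avg m F / s"
proof -
  have "avg m (\<lambda>u. if s \<le> F u then 1 else 0) \<le> avg m (\<lambda>u. (1 / s) * F u)"
    using assms by (intro avg_mono) (auto simp: field_simps)
  also have "\<dots> = (1 / s) * avg m F" by (rule avg_cmult)
  finally show ?thesis by simp
qed

lemma Nr_large: "n \<le> x \<Longrightarrow> Nr n x w = 0"
proof -
  assume nx: "n \<le> x"
  have "rrt_outdeg w n v \<noteq> x" if "v < n" for v
    using outdeg_le[of w n v] that nx by linarith
  then show ?thesis by (simp add: Nr_def)
qed

lemma integral_mset_eq: "integral_mset f (rrt_Out w n) = (\<Sum>v<n. f (rrt_outdeg w n v))"
  unfolding integral_mset_def rrt_Out_def
  by (simp add: image_mset.compositionality sum_unfold_sum_mset atLeast0LessThan o_def)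

lemma dep_E1: "dep m (\<lambda>w. \<exists>x. 1 + real (Suc m) powr (3/4) < \<bar>Nr (Suc m) x w - real (Suc m) / 2^(x+1)\<bar>)"
  unfolding dep_def
proof (intro allI impI)
  fix w w' :: "nat \<Rightarrow> nat" assume e: "\<forall>k<m. w k = w' k"
  have "Nr (Suc m) x w = Nr (Suc m) x w'" for x
    using dep_Nr[of "Suc m" m x] e unfolding dep_def by blast
  then show "(\<exists>x. 1 + real (Suc m) powr (3/4) < \<bar>Nr (Suc m) x w - real (Suc m) / 2^(x+1)\<bar>) =
             (\<exists>x. 1 + real (Suc m) powr (3/4) < \<bar>Nr (Suc m) x w' - real (Suc m) / 2^(x+1)\<bar>)"
    by simp
qed

lemma exponent_bound:
  fixes m :: nat
  defines "M \<equiv> real m + 1"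
  defines "s \<equiv> real (Suc m) powr (3/4)"
  shows "- (s / M) * s + (s / M)\<^sup>2 * 2\<^sup>2 * real m / 8 \<le> - sqrt M / 2"
proof -
  have M0: "M > 0" by (simp add: M_def)
  have sM: "s = M powr (3/4)" by (simp add: s_def M_def add.commute)
  define S2 where "S2 = s * s"
  have S2: "S2 = M * sqrt M"
  proof -
    have "S2 = M powr (3/4 + 3/4)" unfolding S2_def sM by (rule powr_add[symmetric])
    also have "(3/4 + 3/4) = (1::real) + 1/2" by simp
    also have "M powr (1 + 1/2) = M powr 1 * M powr (1/2)" by (rule powr_add)
    also have "\<dots> = M * sqrt M" using M0 by (simp add: powr_half_sqrt)
    finally show ?thesis .
  qed
  have S2nn: "S2 \<ge> 0" unfolding S2_def by simp
  have e1: "- (s / M) * s + (s / M)\<^sup>2 * 2\<^sup>2 * real m / 8 = - S2 / M + S2 * real m / (2 * M\<^sup>2)"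
    using M0 by (simp add: S2_def power2_eq_square field_simps)
  have e2: "S2 * real m / (2 * M\<^sup>2) \<le> S2 * M / (2 * M\<^sup>2)"
    using M0 S2nn by (intro divide_right_mono mult_left_mono) (auto simp: M_def)
  have e3: "S2 * M / (2 * M\<^sup>2) = S2 / (2 * M)"
    using M0 by (simp add: power2_eq_square field_simps)
  have e4: "- S2 / M + S2 / (2 * M) = - sqrt M / 2"
    using M0 unfolding S2 by (simp add: field_simps)
  show ?thesis using e1 e2 e3 e4 by linarith
qed

lemma E1_prob:
  "measure rrt_space {w. \<exists>x. 1 + real (Suc m) powr (3/4) < \<bar>Nr (Suc m) x w - real (Suc m) / 2^(x+1)\<bar>}
     \<le> 2 * (real m + 1) * exp (- sqrt (real m + 1) / 2)"
proof -
  define s where "s = real (Suc m) powr (3/4)"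
  define l where "l = s / (real m + 1)"
  have s0: "s \<ge> 0" by (simp add: s_def)
  have l0: "l \<ge> 0" by (simp add: l_def s0)
  let ?P = "\<lambda>w. \<exists>x. 1 + s < \<bar>Nr (Suc m) x w - real (Suc m) / 2^(x+1)\<bar>"
  let ?I = "\<lambda>x w. if s \<le> \<bar>Nr (Suc m) x w - avg m (Nr (Suc m) x)\<bar> then 1 else (0::real)"
  have "measure rrt_space {w. ?P w} = avg m (\<lambda>w. if ?P w then 1 else 0)"
    unfolding s_def by (rule prob_dep(2)[OF dep_E1])
  also have "\<dots> \<le> avg m (\<lambda>w. \<Sum>x\<le>m. ?I x w)"
  proof (rule avg_mono)
    fix w
    show "(if ?P w then 1 else 0) \<le> (\<Sum>x\<le>m. ?I x w)"
    proof (cases "?P w")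
      case True
      then obtain x where x: "1 + s < \<bar>Nr (Suc m) x w - real (Suc m) / 2^(x+1)\<bar>" by blast
      have xm: "x \<le> m"
      proof (rule ccontr)
        assume "\<not> x \<le> m"
        then have N0: "Nr (Suc m) x w = 0" by (intro Nr_large) auto
        have "real (Suc m) \<le> real x" using \<open>\<not> x \<le> m\<close> by simp
        also have "real x \<le> 2 ^ (x+1)"
        proof -
          have "x \<le> 2 ^ (x+1)" using less_exp[of "x+1"] by simp
          then have "real x \<le> real (2 ^ (x+1))" by (simp only: of_nat_le_iff)
          then show ?thesis by simp
        qed
        finally have F1: "real (Suc m) / 2^(x+1) \<le> 1" by simp
        have pos: "0 \<le> real (Suc m) / 2^(x+1)" by simp
        have "\<bar>Nr (Suc m) x w - real (Suc m) / 2^(x+1)\<bar> = real (Suc m) / 2^(x+1)"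
          using N0 pos by simp
        then show False using x s0 F1 by linarith
      qed
      have tri: "\<bar>Nr (Suc m) x w - real (Suc m) / 2^(x+1)\<bar> \<le>
          \<bar>Nr (Suc m) x w - avg m (Nr (Suc m) x)\<bar> + \<bar>avg m (Nr (Suc m) x) - real (Suc m) / 2^(x+1)\<bar>"
        using abs_triangle_ineq[of "Nr (Suc m) x w - avg m (Nr (Suc m) x)" "avg m (Nr (Suc m) x) - real (Suc m) / 2^(x+1)"]
        by simp
      have "\<bar>avg m (Nr (Suc m) x) - real (Suc m) / 2^(x+1)\<bar> \<le> 1"
        using eN_bound[of m x] by (simp add: eN_def)
      then have "s \<le> \<bar>Nr (Suc m) x w - avg m (Nr (Suc m) x)\<bar>" using x tri by linarith
      then have "1 \<le> ?I x w" by simp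
      also have "?I x w \<le> (\<Sum>x\<le>m. ?I x w)"
        by (rule member_le_sum) (use xm in auto)
      finally show ?thesis using True by simp
    next
      case False then show ?thesis by (simp add: sum_nonneg)
    qed
  qed
  also have "\<dots> = (\<Sum>x\<le>m. avg m (?I x))" by (rule avg_sum) simp
  also have "\<dots> \<le> (\<Sum>x\<le>m. 2 * exp (- l * s + l\<^sup>2 * 2\<^sup>2 * real m / 8))"
    by (intro sum_mono mcdiarmid_abs BD_Nr l0)
  also have "\<dots> = (real m + 1) * (2 * exp (- l * s + l\<^sup>2 * 2\<^sup>2 * real m / 8))" by simp
  also have "\<dots> \<le> (real m + 1) * (2 * exp (- sqrt (real m + 1) / 2))"
    using exponent_bound[of m] unfolding l_def s_def
    by (intro mult_left_mono) auto
  also have "\<dots> = 2 * (real m + 1) * exp (- sqrt (real m + 1) / 2)" by simp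
  finally show ?thesis unfolding s_def .
qed

lemma summable_E1: "summable (\<lambda>m::nat. 2 * (real m + 1) * exp (- sqrt (real m + 1) / 2))"
proof (rule summable_comparison_test_bigo)
  show "summable (\<lambda>m::nat. norm (1 / real m ^ 2))"
    using inverse_power_summable[of 2, where ?'a = real] by (simp add: divide_inverse)
  show "(\<lambda>m::nat. 2 * (real m + 1) * exp (- sqrt (real m + 1) / 2)) \<in> O(\<lambda>m. 1 / real m ^ 2)"
    by real_asymp
qed

lemma E1_AE: "AE w in rrt_space. eventually (\<lambda>m. \<forall>x. \<bar>Nr (Suc m) x w - real (Suc m) / 2^(x+1)\<bar> \<le> 1 + real (Suc m) powr (3/4)) sequentially"
proof -
  define B where "B m = {w. \<exists>x. 1 + real (Suc m) powr (3/4) < \<bar>Nr (Suc m) x w - real (Suc m) / 2^(x+1)\<bar>}" for m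
  have sets: "B m \<in> sets rrt_space" for m unfolding B_def by (rule prob_dep(1)[OF dep_E1])
  have summ: "summable (\<lambda>m. measure rrt_space (B m))"
  proof (rule summable_comparison_test[OF _ summable_E1])
    show "\<exists>N. \<forall>n\<ge>N. norm (measure rrt_space (B n)) \<le> 2 * (real n + 1) * exp (- sqrt (real n + 1) / 2)"
      using E1_prob unfolding B_def by auto
  qed
  have "AE w in rrt_space. eventually (\<lambda>m. w \<in> space rrt_space - B m) sequentially"
    by (rule borel_cantelli_AE1) (use sets summ in \<open>auto simp: R.emeasure_eq_measure\<close>)
  then show ?thesis
    by (rule AE_mp[OF _ AE_I2]) (auto simp: B_def not_less elim!: eventually_mono)
qed

lemma E2_AE:
  assumes b: "1 \<le> b" "b < 2" and \<rho>: "0 < \<rho>" "\<rho> < 1"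
  shows "AE w in rrt_space. eventually (\<lambda>i. Zr b (32^Suc i) w < 32^i / \<rho>^i) sequentially"
proof -
  define B where "B i = {w. 32^i / \<rho>^i \<le> Zr b (32^Suc i) w}" for i
  have d: "dep (32^Suc i - 1) (\<lambda>w. 32^i / \<rho>^i \<le> Zr b (32^Suc i) w)" for i
  proof -
    have "dep (32^Suc i - 1) (Zr b (32^Suc i))" by (rule dep_Zr) simp
    then show ?thesis unfolding dep_def by metis
  qed
  have sets: "B i \<in> sets rrt_space" for i unfolding B_def by (rule prob_dep(1)[OF d])
  have pr: "measure rrt_space (B i) \<le> 32 * \<rho>^i / (2 - b)" for i
  proof -
    define m :: nat where "m = 32^Suc i - 1"
    have Sm: "Suc m = 32^Suc i" by (simp add: m_def)
    have "measure rrt_space (B i) = avg m (\<lambda>w. if 32^i / \<rho>^i \<le> Zr b (32^Suc i) w then 1 else 0)"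
      unfolding B_def m_def by (rule prob_dep(2)[OF d])
    also have "\<dots> \<le> avg m (Zr b (32^Suc i)) / (32^i / \<rho>^i)"
      using \<rho> b by (intro markov_avg Zr_nonneg) auto
    also have "avg m (Zr b (32^Suc i)) = eZ b m" by (simp add: eZ_def Sm)
    also have "eZ b m \<le> real (Suc m) / (2 - b)" by (rule eZ_bound[OF b])
    also have "real (Suc m) / (2 - b) / (32^i / \<rho>^i) = 32 * \<rho>^i / (2 - b)"
      unfolding Sm using \<rho> b by (simp add: field_simps)
    finally show ?thesis using \<rho> by (simp add: divide_right_mono)
  qed
  have summ: "summable (\<lambda>i. measure rrt_space (B i))"
  proof (rule summable_comparison_test[where g = "\<lambda>i. 32 * \<rho>^i / (2 - b)"])
    show "\<exists>N. \<forall>n\<ge>N. norm (measure rrt_space (B n)) \<le> 32 * \<rho>^n / (2 - b)" using pr by auto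
    show "summable (\<lambda>i. 32 * \<rho>^i / (2 - b))"
      using \<rho> by (intro summable_divide summable_mult summable_geometric) auto
  qed
  have "AE w in rrt_space. eventually (\<lambda>i. w \<in> space rrt_space - B i) sequentially"
    by (rule borel_cantelli_AE1) (use sets summ in \<open>auto simp: R.emeasure_eq_measure\<close>)
  then show ?thesis
    by (rule AE_mp[OF _ AE_I2]) (auto simp: B_def not_le elim!: eventually_mono)
qed

lemma split_sum:
  fixes f :: "nat \<Rightarrow> real"
  shows "(\<Sum>v<n. f (rrt_outdeg w n v)) = (\<Sum>x<K. f x * Nr n x w) +
           (\<Sum>v<n. if K \<le> rrt_outdeg w n v then f (rrt_outdeg w n v) else 0)"
proof -
  have e: "f (rrt_outdeg w n v) = (\<Sum>x<K. if rrt_outdeg w n v = x then f x else 0) +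
           (if K \<le> rrt_outdeg w n v then f (rrt_outdeg w n v) else 0)" for v
    by (cases "rrt_outdeg w n v < K") (auto simp: sum.delta')
  have "(\<Sum>v<n. f (rrt_outdeg w n v)) = (\<Sum>v<n. (\<Sum>x<K. if rrt_outdeg w n v = x then f x else 0) +
           (if K \<le> rrt_outdeg w n v then f (rrt_outdeg w n v) else 0))"
    by (rule sum.cong[OF refl e])
  also have "\<dots> = (\<Sum>v<n. \<Sum>x<K. if rrt_outdeg w n v = x then f x else 0) +
           (\<Sum>v<n. if K \<le> rrt_outdeg w n v then f (rrt_outdeg w n v) else 0)"
    by (rule sum.distrib)
  also have "(\<Sum>v<n. \<Sum>x<K. if rrt_outdeg w n v = x then f x else 0) = (\<Sum>x<K. f x * Nr n x w)"
  proof -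
    have "(\<Sum>v<n. \<Sum>x<K. if rrt_outdeg w n v = x then f x else 0) =
          (\<Sum>x<K. \<Sum>v<n. if rrt_outdeg w n v = x then f x else 0)"
      by (rule sum.swap)
    also have "\<dots> = (\<Sum>x<K. f x * Nr n x w)"
      unfolding Nr_def sum_distrib_left by (intro sum.cong refl) auto
    finally show ?thesis .
  qed
  finally show ?thesis .
qed

lemma sum_pow2_le: "(\<Sum>x<k. (2::real) ^ x) \<le> 2 ^ k"
  by (induction k) auto

lemma kappa_facts:
  fixes n :: nat assumes n: "1 \<le> n"
  defines "k \<equiv> floor_log n div 5"
  shows "32 ^ k \<le> n" "n < 32 ^ Suc k" "(2::real) ^ k \<le> real n powr (1/5)"
proof -
  define L where "L = floor_log n"
  have k5: "5 * k \<le> L" unfolding k_def L_def by simp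
  have k5': "Suc L \<le> 5 * Suc k" unfolding k_def L_def by simp
  have p32: "(32::nat) ^ j = 2 ^ (5 * j)" for j by (simp add: power_mult)
  have "(2::nat) ^ (5 * k) \<le> 2 ^ L" using k5 by (intro power_increasing) auto
  also have "2 ^ L \<le> n" unfolding L_def using n by (intro floor_log_exp2_le) simp
  finally show A: "32 ^ k \<le> n" by (simp add: p32)
  have "n < 2 * 2 ^ L" unfolding L_def by (rule floor_log_exp2_gt)
  also have "(2::nat) * 2 ^ L = 2 ^ Suc L" by simp
  also have "\<dots> \<le> 2 ^ (5 * Suc k)" using k5' by (intro power_increasing) auto
  finally have "n < 2 ^ (5 * Suc k)" .
  then show "n < 32 ^ Suc k" unfolding p32 .
  have "(2::real) ^ k = ((2 ^ k) ^ 5) powr (1/5)"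
  proof -
    have e: "((2::real) ^ k) ^ 5 = (2 ^ k) powr (real 5)" by (simp add: powr_realpow)
    have "(((2::real) ^ k) ^ 5) powr (1/5) = ((2 ^ k) powr (real 5)) powr (1/5)" by (simp only: e)
    also have "\<dots> = (2 ^ k) powr (real 5 * (1/5))" by (rule powr_powr)
    also have "real 5 * (1/5) = (1::real)" by simp
    also have "(2 ^ k) powr (1::real) = (2::real) ^ k" by simp
    finally show ?thesis by (rule sym)
  qed
  also have "\<dots> \<le> real n powr (1/5)"
  proof (rule powr_mono2)
    have "((2::real) ^ k) ^ 5 = 2 ^ (k * 5)" by (rule power_mult[symmetric])
    also have "\<dots> = 2 ^ (5 * k)" by (simp add: mult.commute)
    also have "\<dots> = (2 ^ 5) ^ k" by (rule power_mult)
    also have "\<dots> = real (32 ^ k)" by simp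
    also have "\<dots> \<le> real n" using A by (simp only: of_nat_le_iff)
    finally show "((2::real) ^ k) ^ 5 \<le> real n" .
  qed auto
  finally show "(2::real) ^ k \<le> real n powr (1/5)" .
qed

lemma kappa_lim: "filterlim (\<lambda>n::nat. floor_log n div 5) at_top sequentially"
  unfolding filterlim_at_top
proof
  fix Z :: nat
  show "eventually (\<lambda>n. Z \<le> floor_log n div 5) sequentially"
    unfolding eventually_sequentially
  proof (intro exI[of _ "32^Z"] allI impI)
    fix n :: nat assume "32^Z \<le> n"
    then have "floor_log (2^(5*Z)) \<le> floor_log n" by (intro floor_log_le_iff) (simp add: power_mult)
    then have "5*Z \<le> floor_log n" by (simp add: floor_log_power)
    then show "Z \<le> floor_log n div 5" by linarith
  qed
qed

lemma deterministic:
  fixes f :: "nat \<Rightarrow> real" and c C b \<rho> r :: real and w :: "nat \<Rightarrow> nat"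
  assumes c: "1 \<le> c" "c < b" "b < 2" and C: "0 \<le> C" and fb: "\<And>x. \<bar>f x\<bar> \<le> C * c ^ x"
    and r: "r = c / b" and \<rho>: "r < \<rho>" "\<rho> < 1"
    and H1: "eventually (\<lambda>m. \<forall>x. \<bar>Nr (Suc m) x w - real (Suc m) / 2^(x+1)\<bar> \<le> 1 + real (Suc m) powr (3/4)) sequentially"
    and H2: "eventually (\<lambda>i. Zr b (32^Suc i) w < 32^i / \<rho>^i) sequentially"
  shows "(\<lambda>n. (\<Sum>v<n. f (rrt_outdeg w n v)) / real n) \<longlonglongrightarrow> (\<Sum>x. f x / 2^(x+1))"
proof -
  define \<kappa> where "\<kappa> n = floor_log n div 5" for n :: nat
  have \<kappa>_lim: "filterlim \<kappa> at_top sequentially" unfolding \<kappa>_def by (rule kappa_lim)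
  have b0: "0 < b" using c by linarith
  have r0: "0 < r" "r < 1" using c b0 unfolding r by (auto simp: field_simps)
  have \<rho>0: "0 < \<rho>" using r0 \<rho> by linarith
  have rr: "0 < r / \<rho>" "r / \<rho> < 1" using r0 \<rho> \<rho>0 by (auto simp: field_simps)
  have summ: "summable (\<lambda>x. f x / 2^(x+1))"
  proof (rule summable_comparison_test[where g = "\<lambda>x. C / 2 * (c / 2) ^ x"])
    show "summable (\<lambda>x. C / 2 * (c / 2) ^ x)"
      using c by (intro summable_mult summable_geometric) auto
    show "\<exists>N. \<forall>n\<ge>N. norm (f n / 2 ^ (n + 1)) \<le> C / 2 * (c / 2) ^ n"
    proof (intro exI allI impI)
      fix n :: nat
      have "norm (f n / 2 ^ (n + 1)) = \<bar>f n\<bar> / 2 ^ (n + 1)" by (simp add: abs_divide)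
      also have "\<dots> \<le> C * c ^ n / 2 ^ (n + 1)" by (intro divide_right_mono fb) simp
      also have "\<dots> = C / 2 * (c / 2) ^ n" by (simp add: power_divide)
      finally show "norm (f n / 2 ^ (n + 1)) \<le> C / 2 * (c / 2) ^ n" .
    qed
  qed
  define L where "L = (\<Sum>x. f x / 2^(x+1))"
  define S where "S k = (\<Sum>x<k. f x / 2^(x+1))" for k
  have S_lim: "(\<lambda>n. S (\<kappa> n)) \<longlonglongrightarrow> L"
  proof -
    have "S \<longlonglongrightarrow> L" unfolding S_def L_def by (rule summable_LIMSEQ[OF summ])
    then show ?thesis using filterlim_compose[OF _ \<kappa>_lim] by blast
  qed
  define g where "g n = C * (real n powr (1/5) * (1 + real n powr (3/4)) / real n) + \<bar>S (\<kappa> n) - L\<bar> + C * (r / \<rho>) ^ (\<kappa> n)" for n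
  have g0: "g \<longlonglongrightarrow> 0"
  proof -
    have h1: "(\<lambda>n::nat. real n powr (1/5) * (1 + real n powr (3/4)) / real n) \<longlonglongrightarrow> 0" by real_asymp
    have h2: "(\<lambda>n. \<bar>S (\<kappa> n) - L\<bar>) \<longlonglongrightarrow> 0"
      by (rule tendsto_rabs_zero) (use S_lim in \<open>simp add: LIM_zero\<close>)
    have "(\<lambda>k. (r / \<rho>) ^ k) \<longlonglongrightarrow> 0" using rr by (intro LIMSEQ_power_zero) auto
    then have h3: "(\<lambda>n. (r / \<rho>) ^ (\<kappa> n)) \<longlonglongrightarrow> 0" using filterlim_compose[OF _ \<kappa>_lim] by blast
    have "(\<lambda>n. C * (real n powr (1/5) * (1 + real n powr (3/4)) / real n) + \<bar>S (\<kappa> n) - L\<bar> + C * (r / \<rho>) ^ (\<kappa> n))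
        \<longlonglongrightarrow> C * 0 + 0 + C * 0"
      by (intro tendsto_intros h1 h2 h3)
    then show ?thesis unfolding g_def by simp
  qed
  have ev1: "eventually (\<lambda>n. \<forall>x. \<bar>Nr n x w - real n / 2^(x+1)\<bar> \<le> 1 + real n powr (3/4)) sequentially"
    using H1 eventually_sequentially_Suc[of "\<lambda>n. \<forall>x. \<bar>Nr n x w - real n / 2^(x+1)\<bar> \<le> 1 + real n powr (3/4)"]
    by simp
  have ev2: "eventually (\<lambda>n. Zr b (32^Suc (\<kappa> n)) w < 32^(\<kappa> n) / \<rho>^(\<kappa> n)) sequentially"
    using eventually_compose_filterlim[OF H2 \<kappa>_lim] by simp
  have ev3: "eventually (\<lambda>n::nat. 1 \<le> n) sequentially" by (rule eventually_ge_at_top)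
  have "eventually (\<lambda>n. norm ((\<Sum>v<n. f (rrt_outdeg w n v)) / real n - L) \<le> g n) sequentially"
    using ev1 ev2 ev3
  proof eventually_elim
    case (elim n)
    define k where "k = \<kappa> n"
    have n1: "1 \<le> n" and nr: "0 < real n" using elim by auto
    have kn1: "32 ^ k \<le> n" and kn2: "n < 32 ^ Suc k" and k2: "(2::real) ^ k \<le> real n powr (1/5)"
      using kappa_facts[OF n1] unfolding k_def \<kappa>_def by auto
    define Q where "Q = (\<Sum>v<n. if k \<le> rrt_outdeg w n v then f (rrt_outdeg w n v) else 0)"
    define T where "T = (\<Sum>x<k. f x * Nr n x w)"
    have A: "(\<Sum>v<n. f (rrt_outdeg w n v)) / real n = T / real n + Q / real n"
      unfolding T_def Q_def by (subst split_sum[of f w n k]) (simp add: add_divide_distrib)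
    define E where "E = (1 + real n powr (3/4)) / real n"
    have t1: "\<bar>T / real n - S k\<bar> \<le> C * (real n powr (1/5) * (1 + real n powr (3/4)) / real n)"
    proof -
      have "T / real n - S k = (\<Sum>x<k. f x * (Nr n x w / real n - 1 / 2^(x+1)))"
        unfolding T_def S_def by (simp add: sum_divide_distrib sum_subtractf right_diff_distrib)
      also have "\<bar>\<dots>\<bar> \<le> (\<Sum>x<k. \<bar>f x * (Nr n x w / real n - 1 / 2^(x+1))\<bar>)" by (rule sum_abs)
      also have "\<dots> \<le> (\<Sum>x<k. C * 2 ^ x * E)"
      proof (rule sum_mono)
        fix x
        have d: "Nr n x w / real n - 1 / 2^(x+1) = (Nr n x w - real n / 2^(x+1)) / real n"
          using nr by (simp add: field_simps)
        have "\<bar>Nr n x w / real n - 1 / 2^(x+1)\<bar> = \<bar>Nr n x w - real n / 2^(x+1)\<bar> / real n"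
          unfolding d using nr by (simp add: abs_divide)
        also have "\<dots> \<le> E" unfolding E_def using elim(1) nr by (intro divide_right_mono) auto
        finally have e1: "\<bar>Nr n x w / real n - 1 / 2^(x+1)\<bar> \<le> E" .
        have "\<bar>f x\<bar> \<le> C * c ^ x" by (rule fb)
        also have "\<dots> \<le> C * 2 ^ x" using c C by (intro mult_left_mono power_mono) auto
        finally have e2: "\<bar>f x\<bar> \<le> C * 2 ^ x" .
        have "\<bar>f x * (Nr n x w / real n - 1 / 2^(x+1))\<bar> = \<bar>f x\<bar> * \<bar>Nr n x w / real n - 1 / 2^(x+1)\<bar>"
          by (rule abs_mult)
        also have "\<dots> \<le> C * 2 ^ x * E" using e1 e2 by (intro mult_mono) auto
        finally show "\<bar>f x * (Nr n x w / real n - 1 / 2^(x+1))\<bar> \<le> C * 2 ^ x * E" .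
      qed
      also have "\<dots> = C * E * (\<Sum>x<k. 2 ^ x)" by (simp add: sum_distrib_left mult_ac)
      also have "\<dots> \<le> C * E * real n powr (1/5)"
      proof -
        have E0: "0 \<le> E" unfolding E_def using nr by simp
        have "(\<Sum>x<k. (2::real) ^ x) \<le> real n powr (1/5)" using sum_pow2_le[of k] k2 by linarith
        then show ?thesis using C E0 by (intro mult_left_mono) auto
      qed
      also have "\<dots> = C * (real n powr (1/5) * (1 + real n powr (3/4)) / real n)"
        unfolding E_def by simp
      finally show ?thesis .
    qed
    have t3: "\<bar>Q / real n\<bar> \<le> C * (r / \<rho>) ^ k"
    proof -
      have "\<bar>Q\<bar> \<le> (\<Sum>v<n. \<bar>if k \<le> rrt_outdeg w n v then f (rrt_outdeg w n v) else 0\<bar>)"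
        unfolding Q_def by (rule sum_abs)
      also have "\<dots> \<le> (\<Sum>v<n. C * r ^ k * b ^ rrt_outdeg w n v)"
      proof (rule sum_mono)
        fix v
        show "\<bar>if k \<le> rrt_outdeg w n v then f (rrt_outdeg w n v) else 0\<bar> \<le> C * r ^ k * b ^ rrt_outdeg w n v"
        proof (cases "k \<le> rrt_outdeg w n v")
          case True
          define d where "d = rrt_outdeg w n v"
          have "\<bar>f d\<bar> \<le> C * c ^ d" by (rule fb)
          also have "c ^ d = r ^ d * b ^ d" unfolding r using b0 by (simp add: power_divide)
          also have "C * (r ^ d * b ^ d) \<le> C * (r ^ k * b ^ d)"
            using True r0 C b0 unfolding d_def by (intro mult_left_mono mult_right_mono power_decreasing) auto
          finally show ?thesis using True unfolding d_def by (simp add: mult_ac)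
        next
          case False
          then show ?thesis using C r0 b0 by simp
        qed
      qed
      also have "\<dots> = C * r ^ k * Zr b n w" unfolding Zr_def by (simp add: sum_distrib_left)
      also have "\<dots> \<le> C * r ^ k * (real n / \<rho> ^ k)"
      proof (rule mult_left_mono)
        have "Zr b n w \<le> Zr b (32 ^ Suc k) w" using c kn2 by (intro Zr_mono) auto
        also have "\<dots> < 32 ^ k / \<rho> ^ k" using elim(2) unfolding k_def by simp
        also have "\<dots> \<le> real n / \<rho> ^ k"
        proof (rule divide_right_mono)
          have "real (32 ^ k) \<le> real n" using kn1 by (simp only: of_nat_le_iff)
          then show "(32::real) ^ k \<le> real n" by simp
        qed (use \<rho>0 in simp)
        finally show "Zr b n w \<le> real n / \<rho> ^ k" by simp
      qed (use C r0 in simp)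
      finally have "\<bar>Q\<bar> \<le> C * r ^ k * (real n / \<rho> ^ k)" .
      then have "\<bar>Q\<bar> / real n \<le> C * r ^ k * (real n / \<rho> ^ k) / real n" using nr by (intro divide_right_mono) auto
      also have "\<dots> = C * (r / \<rho>) ^ k" using nr by (simp add: power_divide)
      finally show ?thesis using nr by (simp add: abs_divide)
    qed
    have "norm ((\<Sum>v<n. f (rrt_outdeg w n v)) / real n - L) = \<bar>(T / real n - S k) + (S k - L) + Q / real n\<bar>"
      unfolding A by simp
    also have "\<dots> \<le> \<bar>T / real n - S k\<bar> + \<bar>S k - L\<bar> + \<bar>Q / real n\<bar>"
      using abs_triangle_ineq[of "T / real n - S k + (S k - L)" "Q / real n"]
        abs_triangle_ineq[of "T / real n - S k" "S k - L"] by linarith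
    also have "\<dots> \<le> g n" unfolding g_def k_def using t1 t3 unfolding k_def by linarith
    finally show ?case .
  qed
  then have "(\<lambda>n. (\<Sum>v<n. f (rrt_outdeg w n v)) / real n - L) \<longlonglongrightarrow> 0"
    by (rule Lim_null_comparison) (rule g0)
  then show ?thesis unfolding L_def by (rule LIM_zero_cancel)
qed

lemma powi_eq: "(2::real) powi (- int x - 1) = 1 / 2 ^ (x + 1)"
proof -
  have h: "- int x - 1 = - int (x + 1)" by simp
  have "(2::real) powi (- int x - 1) = 2 powi (- int (x + 1))" unfolding h ..
  also have "\<dots> = 1 / 2 powi (int (x + 1))" by (rule power_int_minus_divide)
  also have "\<dots> = 1 / 2 ^ (x + 1)" by (simp only: power_int_of_nat)
  finally show ?thesis .
qed

theorem proposition1: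
  fixes \<epsilon> q :: real and f :: "nat \<Rightarrow> real"
  assumes "0 < \<epsilon>" "\<epsilon> < 1/2" "1 < q" "q < 2"
    and "f \<in> o(\<lambda>x. (2 - \<epsilon>) powr (real x / q))"
  shows "AE w in rrt_space.
           (\<lambda>n. integral_mset f (rrt_Out w n) / real n)
             \<longlonglongrightarrow> (\<Sum>x. 2 powi (- int x - 1) * f x)"
proof -
  define c where "c = (2 - \<epsilon>) powr (1 / q)"
  have e1: "1 < 2 - \<epsilon>" using assms by simp
  have c1: "1 \<le> c" unfolding c_def using e1 assms by (intro ge_one_powr_ge_zero) auto
  have "c < (2 - \<epsilon>) powr 1" unfolding c_def using e1 assms by (intro powr_less_mono) auto
  moreover have "(2 - \<epsilon>) powr 1 = 2 - \<epsilon>" using e1 by simp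
  ultimately have c2: "c < 2" using assms(1) by linarith
  have gx: "(2 - \<epsilon>) powr (real x / q) = c ^ x" for x :: nat
  proof -
    have "c ^ x = c powr real x" using c1 by (simp add: powr_realpow)
    also have "\<dots> = (2 - \<epsilon>) powr (1 / q * real x)" unfolding c_def by (rule powr_powr)
    finally show ?thesis by simp
  qed
  have "eventually (\<lambda>x. norm (f x) \<le> 1 * norm ((2 - \<epsilon>) powr (real x / q))) at_top"
    by (rule landau_o.smallD[OF assms(5)]) simp
  then obtain N where N: "\<And>x. x \<ge> N \<Longrightarrow> \<bar>f x\<bar> \<le> c ^ x"
    unfolding eventually_at_top_linorder gx using c1 by auto
  define C where "C = 1 + (\<Sum>x<N. \<bar>f x\<bar>)"
  have C1: "1 \<le> C" unfolding C_def by (simp add: sum_nonneg)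
  have fb: "\<bar>f x\<bar> \<le> C * c ^ x" for x
  proof (cases "x < N")
    case True
    have "\<bar>f x\<bar> \<le> (\<Sum>x<N. \<bar>f x\<bar>)" by (rule member_le_sum) (use True in auto)
    also have "\<dots> \<le> C" unfolding C_def by simp
    also have "C \<le> C * c ^ x" using C1 c1 by (simp add: one_le_power)
    finally show ?thesis .
  next
    case False
    then have "\<bar>f x\<bar> \<le> c ^ x" using N by simp
    also have "\<dots> \<le> C * c ^ x" using C1 c1 by simp
    finally show ?thesis .
  qed
  define b where "b = (c + 2) / 2"
  define r where "r = c / b"
  define \<rho> where "\<rho> = (1 + r) / 2"
  have b: "1 \<le> b" "b < 2" "c < b" unfolding b_def using c1 c2 by auto
  have r: "r < 1" unfolding r_def using b c1 by (simp add: field_simps)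
  have \<rho>: "r < \<rho>" "\<rho> < 1" "0 < \<rho>" unfolding \<rho>_def using r c1 b
    by (auto simp: r_def field_simps)
  have ae: "AE w in rrt_space.
      eventually (\<lambda>m. \<forall>x. \<bar>Nr (Suc m) x w - real (Suc m) / 2^(x+1)\<bar> \<le> 1 + real (Suc m) powr (3/4)) sequentially \<and>
      eventually (\<lambda>i. Zr b (32^Suc i) w < 32^i / \<rho>^i) sequentially"
    using E1_AE E2_AE[OF b(1,2) \<rho>(3,2)] by eventually_elim auto
  have sumeq: "(\<Sum>x. 2 powi (- int x - 1) * f x) = (\<Sum>x. f x / 2 ^ (x + 1))"
    by (simp add: powi_eq)
  show ?thesis
    using ae
  proof eventually_elim
    case (elim w)
    have "(\<lambda>n. (\<Sum>v<n. f (rrt_outdeg w n v)) / real n) \<longlonglongrightarrow> (\<Sum>x. f x / 2^(x+1))"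
      by (rule deterministic[OF c1 b(3) b(2) _ fb r_def \<rho>(1,2)]) (use C1 elim in auto)
    then show ?case unfolding sumeq integral_mset_eq .
  qed
qed

end
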